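(* Let $c>1$, let $m=m_1\cdots m_c\in S_c$, and let $K$ be the set partition of $S_c$ whose only part with more than one element is the set of cyclic shifts $\{m_am_{a+1}\cdots m_cm_1\cdots m_{a-1}:1\le a\le c\}$. Then for every $j\in\{1,2,\ldots,c\}$, in the $K$-equivalence on $S_{c+1}$ we have $j\rightharpoonup m\equiv m\leftharpoonup(j+1)$ and $m\leftharpoonup j\equiv (j+1)\rightharpoonup m$.
   Context: Permutations are written in one-line notation as words. For a word $w$ and a positive integer $i$, $i\rightharpoonup w$ denotes the word obtained by increasing by $1$ each letter of $w$ that is $\ge i$ and then prepending $i$; $w\leftharpoonup i$ is obtained by increasing by $1$ each letter of $w$ that is $\ge i$ and then appending $i$ at the right end. The order permutation (standardization) of a word $u$ of distinct positive integers of length $\ell$ is the unique $\pi\in S_\ell$ with $\pi_i<\pi_j$ iff $u_i<u_j$. The $K$-equivalence on $S_n$ is generated by declaring $\phi\equiv\psi$ whenever $\phi=aub$, $\psi=avb$ for words $a,b,u,v$ with $u,v$ of length $c$ whose order permutations lie in the same part of $K$. *)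

theory Defs
  imports Main
begin

definition Sym :: "nat \<Rightarrow> nat list set" where
  "Sym n = {w. distinct w \<and> set w = {1..n}}"

text \<open>i \<rightharpoonup> w : shift letters \<ge> i up by one, then prepend i.\<close>
definition prep :: "nat \<Rightarrow> nat list \<Rightarrow> nat list" where
  "prep i w = i # map (\<lambda>x. if i \<le> x then x + 1 else x) w"

text \<open>w \<leftharpoonup> i : shift letters \<ge> i up by one, then append i.\<close>
definition appd :: "nat list \<Rightarrow> nat \<Rightarrow> nat list" where
  "appd w i = map (\<lambda>x. if i \<le> x then x + 1 else x) w @ [i]"

text \<open>Order permutation (standardization) of a word of distinct positive integers.\<close>
definition std :: "nat list \<Rightarrow> nat list" where
  "std u = map (\<lambda>x. card {y \<in> set u. y \<le> x}) u"

definition Kstep :: "nat list set set \<Rightarrow> nat \<Rightarrow> nat \<Rightarrow> nat list \<Rightarrow> nat list \<Rightarrow> bool" where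
  "Kstep K c n phi psi \<longleftrightarrow> phi \<in> Sym n \<and> psi \<in> Sym n \<and>
     (\<exists>a b u v. phi = a @ u @ b \<and> psi = a @ v @ b \<and> length u = c \<and> length v = c \<and>
        (\<exists>P\<in>K. std u \<in> P \<and> std v \<in> P))"

definition Kequiv :: "nat list set set \<Rightarrow> nat \<Rightarrow> nat \<Rightarrow> nat list \<Rightarrow> nat list \<Rightarrow> bool" where
  "Kequiv K c n phi psi \<longleftrightarrow> phi \<in> Sym n \<and> psi \<in> Sym n \<and>
     (\<lambda>x y. Kstep K c n x y \<or> Kstep K c n y x)\<^sup>*\<^sup>* phi psi"

definition cyc_shifts :: "nat list \<Rightarrow> nat list set" where
  "cyc_shifts m = {rotate k m | k. k < length m}"

definition cycK :: "nat \<Rightarrow> nat list \<Rightarrow> nat list set set" where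
  "cycK c m = insert (cyc_shifts m) {{p} | p. p \<in> Sym c - cyc_shifts m}"

end

theory Submission
  imports Defs
begin

definition sh :: "nat \<Rightarrow> nat \<Rightarrow> nat" where
  "sh i x = (if i \<le> x then x + 1 else x)"

lemma sh_mono: "strict_mono_on A (sh i)"
  by (auto simp: strict_mono_on_def sh_def)

lemma std_mono:
  assumes "strict_mono_on (set u) g"
  shows "std (map g u) = std u"
proof -
  have inj: "inj_on g (set u)" using assms strict_mono_on_imp_inj_on by blast
  have le: "g y \<le> g x \<longleftrightarrow> y \<le> x" if "x \<in> set u" "y \<in> set u" for x y
    using assms that unfolding strict_mono_on_def
    by (metis linorder_not_less order_less_imp_le nat_less_le)
  have "card {y \<in> g ` set u. y \<le> g x} = card {y \<in> set u. y \<le> x}" if "x \<in> set u" for x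
  proof -
    have "{y \<in> g ` set u. y \<le> g x} = g ` {y \<in> set u. y \<le> x}"
      using le that by auto
    moreover have "inj_on g {y \<in> set u. y \<le> x}" using inj by (rule inj_on_subset) auto
    ultimately show ?thesis by (simp add: card_image)
  qed
  then show ?thesis unfolding std_def by simp
qed

lemma std_id:
  assumes "m \<in> Sym c" shows "std m = m"
proof -
  have "card {y \<in> set m. y \<le> x} = x" if "x \<in> set m" for x
  proof -
    have "{y \<in> set m. y \<le> x} = {1..x}" using assms that by (auto simp: Sym_def)
    then show ?thesis by simp
  qed
  then show ?thesis unfolding std_def by (simp add: map_idI)
qed

lemma std_rotate: "std (rotate k u) = rotate k (std u)"
  unfolding std_def by (simp add: rotate_map)

lemma rot_in:
  assumes "m \<in> Sym c" "c > 0" shows "rotate k m \<in> cyc_shifts m"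
proof -
  have l: "length m = c" using assms by (auto simp: Sym_def dest: distinct_card)
  have "rotate k m = rotate (k mod c) m" using l by (metis rotate_conv_mod)
  moreover have "k mod c < length m" using l assms(2) by simp
  ultimately show ?thesis unfolding cyc_shifts_def by blast
qed

lemma part_in: "cyc_shifts m \<in> cycK c m"
  by (simp add: cycK_def)

lemma mapsh:
  assumes "m \<in> Sym c" "i \<in> {1..c+1}"
  shows "set (map (sh i) m) = {1..c+1} - {i}" "distinct (map (sh i) m)"
proof -
  have s: "set m = {1..c}" "distinct m" using assms by (auto simp: Sym_def)
  show "set (map (sh i) m) = {1..c+1} - {i}"
  proof
    show "set (map (sh i) m) \<subseteq> {1..c+1} - {i}" using s assms by (auto simp: sh_def)
    show "{1..c+1} - {i} \<subseteq> set (map (sh i) m)"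
    proof
      fix y assume y: "y \<in> {1..c+1} - {i}"
      show "y \<in> set (map (sh i) m)"
      proof (cases "y < i")
        case True
        then have "y \<in> set m" "sh i y = y" using y assms s by (auto simp: sh_def)
        then show ?thesis by (metis image_eqI set_map)
      next
        case False
        then have "y - 1 \<in> set m" "sh i (y - 1) = y" using y assms s by (auto simp: sh_def)
        then show ?thesis by (metis image_eqI set_map)
      qed
    qed
  qed
  show "distinct (map (sh i) m)"
    using s(2) strict_mono_on_imp_inj_on[OF sh_mono] by (simp add: distinct_map)
qed

lemma lenm: "m \<in> Sym c \<Longrightarrow> length m = c"
  by (auto simp: Sym_def dest: distinct_card)

lemma kstep_intro:
  assumes "phi \<in> Sym n" "psi \<in> Sym n" "phi = a @ u @ b" "psi = a @ v @ b"
    "length u = c" "length v = c" "P \<in> K" "std u \<in> P" "std v \<in> P"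
  shows "Kstep K c n phi psi"
  unfolding Kstep_def using assms by blast

theorem lemma2p4:
  fixes c :: nat and m :: "nat list" and j :: nat
  assumes "c > 1" and "m \<in> Sym c" and "j \<in> {1..c}"
  shows "Kequiv (cycK c m) c (c + 1) (prep j m) (appd m (j + 1)) \<and>
         Kequiv (cycK c m) c (c + 1) (appd m j) (prep (j + 1) m)"
proof -
  let ?K = "cycK c m"
  let ?R = "\<lambda>x y. Kstep ?K c (c+1) x y \<or> Kstep ?K c (c+1) y x"
  have ms: "set m = {1..c}" "distinct m" using assms by (auto simp: Sym_def)
  have lm: "length m = c" using lenm assms by auto
  have "j \<in> set m" using ms assms by auto
  then obtain xs ys where m: "m = xs @ j # ys" by (meson split_list)
  have jx: "j \<notin> set xs" "j \<notin> set ys" using ms(2) m by auto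
  define xs' where "xs' = map (sh j) xs"
  define ys' where "ys' = map (sh j) ys"
  have sh2: "map (sh (j+1)) xs = xs'" "map (sh (j+1)) ys = ys'"
    unfolding xs'_def ys'_def using jx by (auto simp: sh_def intro!: map_cong) (metis le_antisym not_less_eq_eq)+
  have mj: "map (sh j) m = xs' @ (j+1) # ys'" by (simp add: m xs'_def ys'_def sh_def)
  have shjj: "sh (j+1) j = j" by (simp add: sh_def)
  have mj1: "map (sh (j+1)) m = xs' @ j # ys'" using sh2 shjj by (simp add: m)
  have ij: "j \<in> {1..c+1}" "j+1 \<in> {1..c+1}" using assms(3) by auto
  note ij1 = ij(2)
  have shf: "(\<lambda>x. if i \<le> x then x + 1 else x) = sh i" for i by (auto simp: sh_def)
  have s1: "set (xs' @ (j+1) # ys') = {1..c+1} - {j}" "distinct (xs' @ (j+1) # ys')"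
    using mapsh[OF assms(2) ij(1)] unfolding mj by auto
  have s2: "set (xs' @ j # ys') = {1..c+1} - {j+1}" "distinct (xs' @ j # ys')"
    using mapsh[OF assms(2) ij1] unfolding mj1 by auto
  have stdA: "std (xs' @ (j+1) # ys') = m"
    using std_mono[OF sh_mono[of "set m" j]] std_id[OF assms(2)] mj by simp
  have stdB: "std (xs' @ j # ys') = m"
    using std_mono[OF sh_mono[of "set m" "j+1"]] std_id[OF assms(2)] mj1 by simp
  have lx: "length xs' + length ys' + 1 = c" using lm m xs'_def ys'_def by simp
  have c0: "c > 0" using assms by simp
  have rotA: "rotate (Suc (length xs')) (xs' @ (j+1) # ys') = ys' @ xs' @ [j+1]"
    by (simp add: rotate_append)
  have rotA': "rotate (length xs') (xs' @ (j+1) # ys') = (j+1) # ys' @ xs'"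
    by (simp add: rotate_append)
  have rotB: "rotate (length xs') (xs' @ j # ys') = j # ys' @ xs'"
    by (simp add: rotate_append)
  have rotB': "rotate (Suc (length xs')) (xs' @ j # ys') = ys' @ xs' @ [j]"
    by (simp add: rotate_append)
  have inK: "\<exists>P\<in>?K. std u \<in> P \<and> std v \<in> P"
    if "std u = rotate k m" "std v = rotate k' m" for u v k k'
    using that rot_in[OF assms(2) c0] part_in by metis
  have m0: "m = rotate 0 m" by simp
  have P0: "prep j m = j # xs' @ (j+1) # ys'" unfolding prep_def shf mj by simp
  have P1: "appd m (j+1) = xs' @ j # ys' @ [j+1]" unfolding appd_def shf mj1 by simp
  define w1 where "w1 = j # ys' @ xs' @ [j+1]"
  have S0: "prep j m \<in> Sym (c+1)" using s1 assms(3) unfolding P0 Sym_def by auto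
  have S1: "w1 \<in> Sym (c+1)" using s1 assms(3) unfolding w1_def Sym_def by auto
  have S2: "appd m (j+1) \<in> Sym (c+1)" using s2 assms(3) unfolding P1 Sym_def by auto
  have sc: "std u \<in> cyc_shifts m" if "std u = rotate k m" for u k
    using that rot_in[OF assms(2) c0] by simp
  have L1: "length (xs' @ (j+1) # ys') = c" "length (ys' @ xs' @ [j+1]) = c"
    "length (xs' @ j # ys') = c" "length (ys' @ xs' @ [j]) = c"
    "length ((j+1) # ys' @ xs') = c" "length (j # ys' @ xs') = c"
    using lx by simp_all
  have R1: "std (ys' @ xs' @ [j+1]) = rotate (Suc (length xs')) m"
    by (simp only: rotA[symmetric] std_rotate stdA)
  have R2: "std (j # ys' @ xs') = rotate (length xs') m"
    by (simp only: rotB[symmetric] std_rotate stdB)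
  have R3: "std ((j+1) # ys' @ xs') = rotate (length xs') m"
    by (simp only: rotA'[symmetric] std_rotate stdA)
  have R4: "std (ys' @ xs' @ [j]) = rotate (Suc (length xs')) m"
    by (simp only: rotB'[symmetric] std_rotate stdB)
  have C0: "std (xs' @ (j+1) # ys') \<in> cyc_shifts m" "std (xs' @ j # ys') \<in> cyc_shifts m"
    using sc[of _ 0] stdA stdB by simp_all
  have st1: "Kstep ?K c (c+1) (prep j m) w1"
    by (rule kstep_intro[OF S0 S1, of "[j]" "xs' @ (j+1) # ys'" "[]" "ys' @ xs' @ [j+1]"])
       (simp add: P0, simp add: w1_def, fact L1, fact L1, fact part_in, fact C0, rule sc, fact R1)
  have st2: "Kstep ?K c (c+1) w1 (appd m (j+1))"
    by (rule kstep_intro[OF S1 S2, of "[]" "j # ys' @ xs'" "[j+1]" "xs' @ j # ys'"])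
       (simp add: w1_def, subst P1, simp, fact L1, fact L1, fact part_in, rule sc, fact R2, fact C0)
  have E1: "Kequiv ?K c (c+1) (prep j m) (appd m (j+1))"
    unfolding Kequiv_def
    by (intro conjI S0 S2 converse_rtranclp_into_rtranclp[OF _ r_into_rtranclp]) (use st1 st2 in blast)+
  have Q0: "appd m j = xs' @ (j+1) # ys' @ [j]" unfolding appd_def shf mj by simp
  have Q1: "prep (j+1) m = (j+1) # xs' @ j # ys'" unfolding prep_def shf mj1 by simp
  define w2 where "w2 = (j+1) # ys' @ xs' @ [j]"
  have T0: "appd m j \<in> Sym (c+1)" using s1 assms(3) unfolding Q0 Sym_def by auto
  have T1: "w2 \<in> Sym (c+1)" using s1 assms(3) unfolding w2_def Sym_def by auto
  have T2: "prep (j+1) m \<in> Sym (c+1)" using s2 assms(3) unfolding Q1 Sym_def by auto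
  have st3: "Kstep ?K c (c+1) (appd m j) w2"
    by (rule kstep_intro[OF T0 T1, of "[]" "xs' @ (j+1) # ys'" "[j]" "(j+1) # ys' @ xs'"])
       (simp add: Q0, simp add: w2_def, fact L1, fact L1, fact part_in, fact C0, rule sc, fact R3)
  have st4: "Kstep ?K c (c+1) w2 (prep (j+1) m)"
    by (rule kstep_intro[OF T1 T2, of "[j+1]" "ys' @ xs' @ [j]" "[]" "xs' @ j # ys'"])
       (simp add: w2_def, subst Q1, simp, fact L1, fact L1, fact part_in, rule sc, fact R4, fact C0)
  have E2: "Kequiv ?K c (c+1) (appd m j) (prep (j+1) m)"
    unfolding Kequiv_def
    by (intro conjI T0 T2 converse_rtranclp_into_rtranclp[OF _ r_into_rtranclp]) (use st3 st4 in blast)+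
  show ?thesis using E1 E2 by simp
qed

end
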